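(* Let $T=\mathbb{R}^k/\mathbb{Z}^k$, let $m$ and $C$ be natural numbers, and let $\Lambda\leq T[m]$ be a subgroup with $[T[m]:\Lambda]\leq C$. Then there is a natural number $m'$ satisfying $m'\geq m/C!$ and $T[m']\leq\Lambda$.
   Context: For a natural number $m$, $T[m]$ denotes the $m$-torsion subgroup of $T$. *)

theory Defs
  imports "HOL-Algebra.Algebra" Complex_Main
begin

text \<open>The torus T = R^k / Z^k, represented by its fundamental domain [0,1)^k
  (coordinates with index >= k are fixed to 0), with addition modulo 1.
  Written multiplicatively as an HOL-Algebra monoid.\<close>

definition torus :: "nat \<Rightarrow> (nat \<Rightarrow> real) monoid" where
  "torus k = \<lparr>partial_object.carrier = {x. (\<forall>i<k. 0 \<le> x i \<and> x i < 1) \<and> (\<forall>i\<ge>k. x i = 0)},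
              monoid.mult = (\<lambda>x y i. frac (x i + y i)),
              monoid.one = (\<lambda>i. 0)\<rparr>"

definition torsion :: "nat \<Rightarrow> nat \<Rightarrow> (nat \<Rightarrow> real) set" where
  "torsion k m = {x \<in> carrier (torus k). x [^]\<^bsub>torus k\<^esub> m = \<one>\<^bsub>torus k\<^esub>}"

end

theory Submission imports Defs "HOL-Number_Theory.Cong" begin

lemma frac_add_int: "x \<in> \<int> \<Longrightarrow> frac (y + x) = frac y"
  by (simp add: frac_def)

lemma frac_frac_add: "frac (frac a + b) = frac (a + b)"
proof -
  have "frac a + b = (a + b) + (- of_int (floor a))" by (simp add: frac_def)
  thus ?thesis by (metis frac_add_int Ints_minus Ints_of_int)
qed

lemma frac_add_frac: "frac (a + frac b) = frac (a + b)"
  using frac_frac_add[of b a] by (simp add: add.commute)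

lemma torus_carrier: "carrier (torus k) = {x. (\<forall>i<k. 0 \<le> x i \<and> x i < 1) \<and> (\<forall>i\<ge>k. x i = 0)}"
  by (simp add: torus_def)
lemma torus_mult: "x \<otimes>\<^bsub>torus k\<^esub> y = (\<lambda>i. frac (x i + y i))"
  by (simp add: torus_def)
lemma torus_one: "\<one>\<^bsub>torus k\<^esub> = (\<lambda>i. 0)"
  by (simp add: torus_def)

lemma frac_id: "0 \<le> x \<Longrightarrow> x < 1 \<Longrightarrow> frac x = x"
  by (simp add: frac_eq)

lemma torus_comm_group: "comm_group (torus k)"
proof (rule comm_groupI)
  fix x y assume x: "x \<in> carrier (torus k)" and y: "y \<in> carrier (torus k)"
  show "x \<otimes>\<^bsub>torus k\<^esub> y \<in> carrier (torus k)"
    using x y by (auto simp: torus_carrier torus_mult frac_lt_1)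
  show "x \<otimes>\<^bsub>torus k\<^esub> y = y \<otimes>\<^bsub>torus k\<^esub> x"
    by (simp add: torus_mult add.commute)
next
  show "\<one>\<^bsub>torus k\<^esub> \<in> carrier (torus k)" by (simp add: torus_carrier torus_one)
next
  fix x y z
  show "x \<otimes>\<^bsub>torus k\<^esub> y \<otimes>\<^bsub>torus k\<^esub> z = x \<otimes>\<^bsub>torus k\<^esub> (y \<otimes>\<^bsub>torus k\<^esub> z)"
    by (simp add: torus_mult frac_frac_add frac_add_frac add.assoc)
next
  fix x assume x: "x \<in> carrier (torus k)"
  thus "\<one>\<^bsub>torus k\<^esub> \<otimes>\<^bsub>torus k\<^esub> x = x"
  proof -
    have "frac (x i) = x i" for i
      using x by (cases "i < k") (auto simp: torus_carrier frac_id)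
    thus ?thesis by (simp add: torus_mult torus_one)
  qed
  show "\<exists>y\<in>carrier (torus k). y \<otimes>\<^bsub>torus k\<^esub> x = \<one>\<^bsub>torus k\<^esub>"
  proof (intro bexI)
    show "(\<lambda>i. frac (- x i)) \<otimes>\<^bsub>torus k\<^esub> x = \<one>\<^bsub>torus k\<^esub>"
      by (simp add: torus_mult torus_one frac_frac_add)
    show "(\<lambda>i. frac (- x i)) \<in> carrier (torus k)"
      using x by (auto simp: torus_carrier frac_lt_1)
  qed
qed

lemma torus_pow: "x \<in> carrier (torus k) \<Longrightarrow> x [^]\<^bsub>torus k\<^esub> (n::nat) = (\<lambda>i. frac (real n * x i))"
proof (induction n)
  case 0 thus ?case by (simp add: torus_one)
next
  case (Suc n)
  thus ?case by (simp add: torus_mult frac_frac_add algebra_simps)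
qed


lemma torsion_subgroup: "subgroup (torsion k m) (torus k)"
proof -
  interpret comm_group "torus k" by (rule torus_comm_group)
  show ?thesis
  proof (rule subgroupI)
    show "torsion k m \<subseteq> carrier (torus k)" by (auto simp: torsion_def)
    show "torsion k m \<noteq> {}" using one_closed by (auto simp: torsion_def)
  next
    fix a assume "a \<in> torsion k m"
    thus "inv\<^bsub>torus k\<^esub> a \<in> torsion k m" by (auto simp: torsion_def nat_pow_inv)
  next
    fix a b assume "a \<in> torsion k m" "b \<in> torsion k m"
    thus "a \<otimes>\<^bsub>torus k\<^esub> b \<in> torsion k m"
      by (auto simp: torsion_def pow_mult_distrib m_comm)
  qed
qed

lemma index_kills:
  assumes sub: "subgroup \<Lambda> (torus k)"
    and le: "\<Lambda> \<subseteq> torsion k m"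
    and z: "z \<in> torsion k m"
  shows "z [^]\<^bsub>torus k\<^esub> card (rcosets\<^bsub>(torus k)\<lparr>carrier := torsion k m\<rparr>\<^esub> \<Lambda>) \<in> \<Lambda>"
proof -
  let ?G = "(torus k)\<lparr>carrier := torsion k m\<rparr>"
  let ?N = "card (rcosets\<^bsub>?G\<^esub> \<Lambda>)"
  interpret T: comm_group "torus k" by (rule torus_comm_group)
  have grp: "group ?G" by (rule T.subgroup_imp_group[OF torsion_subgroup])
  have cg: "comm_group ?G"
    by (rule group.group_comm_groupI[OF grp]) (auto simp: T.m_comm torsion_def)
  interpret G: comm_group ?G by (rule cg)
  have subG: "subgroup \<Lambda> ?G" by (rule T.subgroup_incl[OF sub torsion_subgroup le])
  interpret nrm: normal \<Lambda> ?G by (rule G.subgroup_imp_normal[OF subG])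
  have fg: "group (?G Mod \<Lambda>)" by (rule nrm.factorgroup_is_group)
  have zc: "z \<in> carrier ?G" using z by simp
  have "(\<lambda>a. \<Lambda> #>\<^bsub>?G\<^esub> a) (z [^]\<^bsub>?G\<^esub> ?N) = (\<Lambda> #>\<^bsub>?G\<^esub> z) [^]\<^bsub>?G Mod \<Lambda>\<^esub> ?N"
    by (rule hom_nat_pow[OF nrm.r_coset_hom_Mod zc grp fg])
  also have "\<dots> = \<one>\<^bsub>?G Mod \<Lambda>\<^esub>"
  proof -
    have "order (?G Mod \<Lambda>) = ?N" by (simp add: order_def FactGroup_def)
    moreover have "\<Lambda> #>\<^bsub>?G\<^esub> z \<in> carrier (?G Mod \<Lambda>)" using zc
      by (simp add: FactGroup_def RCOSETS_def) blast
    ultimately show ?thesis using group.pow_order_eq_1[OF fg] by metis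
  qed
  also have "\<dots> = \<Lambda>" by simp
  finally have eq: "\<Lambda> #>\<^bsub>?G\<^esub> (z [^]\<^bsub>?G\<^esub> ?N) = \<Lambda>" .
  have "z [^]\<^bsub>?G\<^esub> ?N \<in> carrier ?G" using zc by (rule G.nat_pow_closed)
  hence "z [^]\<^bsub>?G\<^esub> ?N \<in> \<Lambda> #>\<^bsub>?G\<^esub> (z [^]\<^bsub>?G\<^esub> ?N)" using G.rcos_self subG by blast
  with eq have "z [^]\<^bsub>?G\<^esub> ?N \<in> \<Lambda>" by simp
  thus ?thesis by (metis T.nat_pow_consistent)
qed


theorem lemma3p12:
  fixes k m C :: nat and \<Lambda> :: "(nat \<Rightarrow> real) set"
  assumes "subgroup \<Lambda> (torus k)"
    and "\<Lambda> \<subseteq> torsion k m"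
    and "finite (rcosets\<^bsub>(torus k)\<lparr>carrier := torsion k m\<rparr>\<^esub> \<Lambda>)"
    and "card (rcosets\<^bsub>(torus k)\<lparr>carrier := torsion k m\<rparr>\<^esub> \<Lambda>) \<le> C"
  shows "\<exists>m'::nat. real m' \<ge> real m / fact C \<and> torsion k m' \<subseteq> \<Lambda>"
proof -
  let ?G = "(torus k)\<lparr>carrier := torsion k m\<rparr>"
  let ?N = "card (rcosets\<^bsub>?G\<^esub> \<Lambda>)"
  define F where "F = (fact C :: nat)"
  interpret T: comm_group "torus k" by (rule torus_comm_group)
  have oneT: "\<one>\<^bsub>torus k\<^esub> \<in> torsion k m" by (simp add: torsion_def)
  have "\<Lambda> #>\<^bsub>?G\<^esub> \<one>\<^bsub>torus k\<^esub> \<in> rcosets\<^bsub>?G\<^esub> \<Lambda>"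
    using oneT by (auto simp: RCOSETS_def)
  hence "rcosets\<^bsub>?G\<^esub> \<Lambda> \<noteq> {}" by blast
  hence N1: "1 \<le> ?N" using assms(3) by (simp add: Suc_le_eq card_gt_0_iff)
  have NF: "?N dvd F" unfolding F_def using N1 assms(4) by (rule dvd_fact)
  have Fpos: "F > 0" by (simp add: F_def)
  have kill: "z [^]\<^bsub>torus k\<^esub> F \<in> \<Lambda>" if z: "z \<in> torsion k m" for z
  proof -
    obtain q where q: "F = ?N * q" using NF by blast
    have zc: "z \<in> carrier (torus k)" using z by (simp add: torsion_def)
    have "z [^]\<^bsub>torus k\<^esub> F = (z [^]\<^bsub>torus k\<^esub> ?N) [^]\<^bsub>torus k\<^esub> q"
      using q zc by (simp add: T.nat_pow_pow)
    moreover have "z [^]\<^bsub>torus k\<^esub> ?N \<in> \<Lambda>" by (rule index_kills[OF assms(1,2) z])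
    moreover have "\<And>w. w \<in> \<Lambda> \<Longrightarrow> w [^]\<^bsub>torus k\<^esub> q \<in> \<Lambda>"
    proof -
      fix w assume w: "w \<in> \<Lambda>"
      have "monoid ((torus k)\<lparr>carrier := \<Lambda>\<rparr>)"
        using group.is_monoid[OF T.subgroup_imp_group[OF assms(1)]] .
      from monoid.nat_pow_closed[OF this] w
      have "w [^]\<^bsub>(torus k)\<lparr>carrier := \<Lambda>\<rparr>\<^esub> q \<in> \<Lambda>" by simp
      thus "w [^]\<^bsub>torus k\<^esub> q \<in> \<Lambda>" by (metis T.nat_pow_consistent)
    qed
    ultimately show ?thesis by simp
  qed
  show ?thesis
  proof (cases "m = 0")
    case True
    have "torsion k 1 \<subseteq> \<Lambda>"
    proof
      fix x assume "x \<in> torsion k 1"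
      hence "x = \<one>\<^bsub>torus k\<^esub>" by (auto simp: torsion_def)
      thus "x \<in> \<Lambda>" using assms(1) subgroup.one_closed by blast
    qed
    thus ?thesis using True by (intro exI[of _ 1]) simp
  next
    case False
    define g where "g = gcd F m"
    define m' where "m' = m div g"
    define n' where "n' = F div g"
    have gpos: "g > 0" using False by (simp add: g_def)
    have gm: "m = g * m'" by (simp add: g_def m'_def)
    have gF: "F = g * n'" by (simp add: g_def n'_def)
    have cop: "coprime n' m'" unfolding n'_def m'_def g_def
      using Fpos by (intro div_gcd_coprime) simp
    obtain u where u: "[n' * u = 1] (mod m')" using cong_solve_coprime_nat[OF cop] by (auto simp: One_nat_def)
    have bound: "real m' \<ge> real m / fact C"
    proof -
      have "g \<le> F" using Fpos by (simp add: g_def gcd_le1_nat)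
      hence "real g \<le> fact C" unfolding F_def by (metis of_nat_fact of_nat_le_iff)
      moreover have "real m = real g * real m'" using gm by simp
      ultimately show ?thesis using gpos
        by (simp add: divide_le_eq mult.commute mult_right_mono)
    qed
    have "torsion k m' \<subseteq> \<Lambda>"
    proof
      fix x assume x: "x \<in> torsion k m'"
      have xc: "x \<in> carrier (torus k)" and xm: "x [^]\<^bsub>torus k\<^esub> m' = \<one>\<^bsub>torus k\<^esub>"
        using x by (auto simp: torsion_def)
      define x' where "x' = x [^]\<^bsub>torus k\<^esub> u"
      have x'c: "x' \<in> carrier (torus k)" using xc by (simp add: x'_def)
      define y where "y = (\<lambda>i. x' i / real g)"
      have yc: "y \<in> carrier (torus k)"
        using x'c gpos by (auto simp: y_def torus_carrier divide_less_eq_1)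
      have yg: "y [^]\<^bsub>torus k\<^esub> g = x'"
      proof -
        have "frac (real g * y i) = x' i" for i
          using x'c gpos by (cases "i < k") (auto simp: y_def torus_carrier frac_id)
        thus ?thesis using torus_pow[OF yc] by auto
      qed
      have "y [^]\<^bsub>torus k\<^esub> m = (y [^]\<^bsub>torus k\<^esub> g) [^]\<^bsub>torus k\<^esub> m'"
        using gm yc by (simp add: T.nat_pow_pow)
      also have "\<dots> = (x [^]\<^bsub>torus k\<^esub> m') [^]\<^bsub>torus k\<^esub> u"
        using yg xc by (simp add: x'_def T.nat_pow_pow mult.commute)
      also have "\<dots> = \<one>\<^bsub>torus k\<^esub>" by (simp add: xm)
      finally have ytor: "y \<in> torsion k m" using yc by (simp add: torsion_def)
      have "x [^]\<^bsub>torus k\<^esub> (n' * u) = x"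
      proof -
        have "x [^]\<^bsub>torus k\<^esub> (n' * u) = x [^]\<^bsub>torus k\<^esub> (m' * ((n' * u) div m') + (n' * u) mod m')"
          by simp
        also have "\<dots> = x [^]\<^bsub>torus k\<^esub> ((n' * u) mod m')"
        proof -
          have "x [^]\<^bsub>torus k\<^esub> (m' * ((n' * u) div m')) = \<one>\<^bsub>torus k\<^esub>"
            using xc xm by (simp add: T.nat_pow_pow[symmetric])
          hence "x [^]\<^bsub>torus k\<^esub> (m' * ((n' * u) div m')) \<otimes>\<^bsub>torus k\<^esub> x [^]\<^bsub>torus k\<^esub> ((n' * u) mod m')
              = x [^]\<^bsub>torus k\<^esub> ((n' * u) mod m')" using xc by simp
          thus ?thesis using xc by (simp only: T.nat_pow_mult)
        qed
        also have "\<dots> = x [^]\<^bsub>torus k\<^esub> (1 mod m')" using u by (simp add: cong_def)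
        also have "\<dots> = x"
        proof (cases "m' = 1")
          case True thus ?thesis using xm xc by simp
        next
          case False thus ?thesis using xc by simp
        qed
        finally show ?thesis .
      qed
      moreover have "y [^]\<^bsub>torus k\<^esub> F = x [^]\<^bsub>torus k\<^esub> (n' * u)"
      proof -
        have "y [^]\<^bsub>torus k\<^esub> F = (y [^]\<^bsub>torus k\<^esub> g) [^]\<^bsub>torus k\<^esub> n'"
          using gF yc by (simp add: T.nat_pow_pow)
        also have "\<dots> = x [^]\<^bsub>torus k\<^esub> (u * n')" using yg xc by (simp add: x'_def T.nat_pow_pow)
        finally show ?thesis by (simp add: mult.commute)
      qed
      ultimately show "x \<in> \<Lambda>" using kill[OF ytor] by simp
    qed
    thus ?thesis using bound by blast
  qed
qed

end
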